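(* Let $(R,\mathfrak{m})$ satisfy condition $\bigstar$, and let $S$ be a maximal element of the set of proper subrings of $R$ having the same residue field as $R$. Then $S$ contains the ideal $\mathfrak{m}^2+pR$, the maximal ideal $\mathfrak{m}_S$ of $S$ is an ideal of $R$, and $\mathfrak{m}^2+pR\subseteq\mathfrak{m}_S$.
   Context: All rings are commutative and unital. Condition $\bigstar$ on a ring $(R,\mathfrak{m})$: $R$ is a local ring (unique maximal ideal $\mathfrak{m}$, not necessarily Noetherian) of characteristic $p^N$ for a prime $p$ and some $N\ge 1$, with finite residue field $R/\mathfrak{m}\cong\mathbb{F}_q$, and $\mathfrak{m}$ is a nilpotent ideal. Any subring $S$ of $R$ is local with maximal ideal $\mathfrak{m}_S=\mathfrak{m}\cap S$, and its residue field $S/\mathfrak{m}_S$ is naturally a subfield of $R/\mathfrak{m}$; "same residue field as $R$" means equality under this identification. *)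

theory Defs
  imports "HOL-Algebra.Algebra" "HOL-Computational_Algebra.Primes"
begin

definition ring_char :: "('a, 'b) ring_scheme \<Rightarrow> nat" where
  "ring_char R =
     (if \<exists>n::nat. n > 0 \<and> [n] \<cdot>\<^bsub>R\<^esub> \<one>\<^bsub>R\<^esub> = \<zero>\<^bsub>R\<^esub>
      then (LEAST n::nat. n > 0 \<and> [n] \<cdot>\<^bsub>R\<^esub> \<one>\<^bsub>R\<^esub> = \<zero>\<^bsub>R\<^esub>)
      else 0)"

fun ideal_power :: "('a, 'b) ring_scheme \<Rightarrow> 'a set \<Rightarrow> nat \<Rightarrow> 'a set" where
  "ideal_power R I 0 = carrier R"
| "ideal_power R I (Suc n) = ideal_prod R I (ideal_power R I n)"

definition nilpotent_ideal :: "('a, 'b) ring_scheme \<Rightarrow> 'a set \<Rightarrow> bool" where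
  "nilpotent_ideal R I \<longleftrightarrow> (\<exists>n. ideal_power R I n = {\<zero>\<^bsub>R\<^esub>})"

definition local_ring_with :: "('a, 'b) ring_scheme \<Rightarrow> 'a set \<Rightarrow> bool" where
  "local_ring_with R m \<longleftrightarrow> maximalideal m R \<and> (\<forall>I. maximalideal I R \<longrightarrow> I = m)"

definition cond_star :: "('a, 'b) ring_scheme \<Rightarrow> 'a set \<Rightarrow> nat \<Rightarrow> bool" where
  "cond_star R m p \<longleftrightarrow>
     cring R \<and> local_ring_with R m \<and> Factorial_Ring.prime p \<and>
     (\<exists>N::nat. N \<ge> 1 \<and> ring_char R = p ^ N) \<and>
     finite (carrier (R Quot m)) \<and>
     nilpotent_ideal R m"

(* The subring S has the same residue field as R: the natural embedding
   S/(m \<inter> S) \<rightarrow> R/m is onto, i.e. every residue class of R/m meets S. *)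
definition same_residue_field :: "('a, 'b) ring_scheme \<Rightarrow> 'a set \<Rightarrow> 'a set \<Rightarrow> bool" where
  "same_residue_field R m S \<longleftrightarrow> (\<forall>x \<in> carrier R. \<exists>s \<in> S. x \<ominus>\<^bsub>R\<^esub> s \<in> m)"

definition proper_subrings_same_residue :: "('a, 'b) ring_scheme \<Rightarrow> 'a set \<Rightarrow> 'a set set" where
  "proper_subrings_same_residue R m =
     {T. subring T R \<and> T \<noteq> carrier R \<and> same_residue_field R m T}"

end

theory Submission
  imports Defs
begin

context cring
begin

lemma ip_ideal: "ideal m R \<Longrightarrow> ideal (ideal_power R m k) R"
  by (induction k) (auto intro: oneideal ideal_prod_is_ideal)

lemma ip_add: assumes "ideal m R"
  shows "ideal_power R m (i + j) = ideal_power R m i \<cdot> ideal_power R m j"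
proof (induction i)
  case 0
  have "carrier R \<cdot> ideal_power R m j = ideal_power R m j"
    using ideal_prod_commute[OF oneideal ip_ideal[OF assms]] ideal_prod_one[OF ip_ideal[OF assms]]
    by simp
  then show ?case by simp
next
  case (Suc i)
  then show ?case
    using ideal_prod_assoc[OF assms ip_ideal[OF assms] ip_ideal[OF assms]] by simp
qed

lemma ip_mult: "ideal m R \<Longrightarrow> a \<in> ideal_power R m i \<Longrightarrow> b \<in> ideal_power R m j
   \<Longrightarrow> a \<otimes> b \<in> ideal_power R m (i + j)"
  using ip_add[of m i j] ideal_prod.prod[of a "ideal_power R m i" b "ideal_power R m j" R] by simp

lemma ip_Suc_sub: "ideal m R \<Longrightarrow> ideal_power R m (Suc k) \<subseteq> ideal_power R m k"
  using ideal_prod_inter[of m "ideal_power R m k", OF _ ip_ideal[of m k]] by simp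

lemma ip_mono: assumes "ideal m R" "i \<le> j" shows "ideal_power R m j \<subseteq> ideal_power R m i"
  using assms(2)
proof (induction j rule: dec_induct)
  case base then show ?case by (rule order.refl)
next
  case (step n) show ?case using ip_Suc_sub[OF assms(1), of n] step(3) by (rule order_trans)
qed

lemma ip_one: "ideal m R \<Longrightarrow> ideal_power R m 1 = m"
  using ideal_prod_one[of m] by (simp add: One_nat_def)

lemma ip_carr: "ideal m R \<Longrightarrow> x \<in> ideal_power R m k \<Longrightarrow> x \<in> carrier R"
  using ip_ideal[of m k] ideal.Icarr[of "ideal_power R m k" R x] by simp

lemma pow_char: "(add_pow R (p::nat) \<one>) [^] (N::nat) = add_pow R (p ^ N) \<one>"
proof (induction N)
  case 0 then show ?case by simp
next
  case (Suc N)
  have "(add_pow R (p) \<one>) [^] Suc N = (add_pow R (p ^ N) \<one>) \<otimes> (add_pow R (p) \<one>)" using Suc by simp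
  also have "\<dots> = add_pow R (p) (add_pow R (p ^ N) \<one>)" using add_pow_rdistr[of "add_pow R (p ^ N) \<one>" \<one> p] by simp
  also have "\<dots> = add_pow R (p ^ Suc N) \<one>" using add.nat_pow_pow[of \<one> p "p^N"] by (simp add: mult.commute)
  finally show ?case .
qed

lemma prime_pow_in: "primeideal I R \<Longrightarrow> x \<in> carrier R \<Longrightarrow> x [^] (N::nat) \<in> I \<Longrightarrow> N \<ge> 1 \<Longrightarrow> x \<in> I"
proof (induction N)
  case 0 then show ?case by simp
next
  case (Suc N)
  show ?case
  proof (cases "N = 0")
    case True then show ?thesis using Suc by simp
  next
    case False
    have "x [^] N \<otimes> x \<in> I" using Suc by simp
    then have "x [^] N \<in> I \<or> x \<in> I" using primeideal.I_prime[OF Suc(2)] Suc by simp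
    then show ?thesis using Suc False by auto
  qed
qed

lemma natpow_in_subring: "subring S R \<Longrightarrow> add_pow R (k::nat) \<one> \<in> S"
  by (induction k) (auto simp: subringE)

lemma id_add: "ideal I R \<Longrightarrow> a \<in> I \<Longrightarrow> b \<in> I \<Longrightarrow> a \<oplus> b \<in> I"
  by (rule additive_subgroup.a_closed[OF ideal.axioms(1)])

lemma id_neg: "ideal I R \<Longrightarrow> a \<in> I \<Longrightarrow> \<ominus> a \<in> I"
  by (rule additive_subgroup.a_inv_closed[OF ideal.axioms(1)])

lemma id_zero: "ideal I R \<Longrightarrow> \<zero> \<in> I"
  by (rule additive_subgroup.zero_closed[OF ideal.axioms(1)])

lemma id_minus: "ideal I R \<Longrightarrow> a \<in> I \<Longrightarrow> b \<in> I \<Longrightarrow> a \<ominus> b \<in> I"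
  unfolding a_minus_def by (rule id_add, assumption, assumption, rule id_neg)

lemma main:
  assumes mI: "ideal m R"
    and nil: "ideal_power R m n = {\<zero>}"
    and pm: "add_pow R (p::nat) \<one> \<in> m"
    and Ssub: "subring S R" and Sne: "S \<noteq> carrier R"
    and res: "same_residue_field R m S"
    and Smax: "\<And>T. subring T R \<Longrightarrow> T \<noteq> carrier R \<Longrightarrow> same_residue_field R m T \<Longrightarrow> S \<subseteq> T \<Longrightarrow> T = S"
  shows "(m \<cdot> m) <+>\<^bsub>R\<^esub> (PIdl (add_pow R p \<one>)) \<subseteq> S \<and> ideal (m \<inter> S) R \<and>
         (m \<cdot> m) <+>\<^bsub>R\<^esub> (PIdl (add_pow R p \<one>)) \<subseteq> m \<inter> S"
proof -
  define q where "q = add_pow R p \<one>"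
  define P where "P = ideal_power R m"
  define I where "I = P 2 <+>\<^bsub>R\<^esub> PIdl q"
  have P2: "P 2 = m \<cdot> m" unfolding P_def using ideal_prod_one[OF mI] by (simp add: numeral_2_eq_2)
  have P1: "P 1 = m" unfolding P_def using ip_one[OF mI] .
  have Pid: "\<And>k. ideal (P k) R" unfolding P_def using ip_ideal[OF mI] .
  have Pc: "\<And>k x. x \<in> P k \<Longrightarrow> x \<in> carrier R" unfolding P_def using ip_carr[OF mI] .
  have Pm: "\<And>i j a b. a \<in> P i \<Longrightarrow> b \<in> P j \<Longrightarrow> a \<otimes> b \<in> P (i + j)"
    unfolding P_def using ip_mult[OF mI] .
  have Pmono: "\<And>i j. i \<le> j \<Longrightarrow> P j \<subseteq> P i" unfolding P_def by (rule ip_mono[OF mI])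
  have mc: "\<And>x. x \<in> m \<Longrightarrow> x \<in> carrier R" by (rule ideal.Icarr[OF mI])
  have Sc: "\<And>x. x \<in> S \<Longrightarrow> x \<in> carrier R" using subringE(1)[OF Ssub] by blast
  have qS: "q \<in> S" unfolding q_def using natpow_in_subring[OF Ssub] .
  have qc: "q \<in> carrier R" using qS Sc by blast
  have qm: "q \<in> m" using pm q_def by simp
  have P2m: "P 2 \<subseteq> m" using Pmono[of 1 2] P1 by (simp add: numeral_2_eq_2)
  have Iid: "ideal I R" unfolding I_def by (rule add_ideals[OF Pid cgenideal_ideal[OF qc]])
  have Ic: "\<And>x. x \<in> I \<Longrightarrow> x \<in> carrier R" by (rule ideal.Icarr[OF Iid])
  have P2I: "P 2 \<subseteq> I"
  proof
    fix a assume a: "a \<in> P 2"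
    have "\<zero> \<otimes> q \<in> PIdl q" unfolding cgenideal_def using zero_closed by blast
    then have "a \<oplus> \<zero> \<otimes> q \<in> I" unfolding I_def set_add_def' using a by blast
    then show "a \<in> I" using a Pc qc by simp
  qed
  have Im: "I \<subseteq> m"
  proof
    fix x assume "x \<in> I"
    then obtain a c where a: "a \<in> P 2" and c: "c \<in> carrier R" and x: "x = a \<oplus> c \<otimes> q"
      unfolding I_def set_add_def' cgenideal_def by blast
    have "c \<otimes> q \<in> m" using ideal.I_l_closed[OF mI qm c] .
    moreover have "a \<in> m" using a P2m by blast
    ultimately show "x \<in> m" unfolding x by (rule id_add[OF mI, rotated])
  qed
  define T where "T = S <+>\<^bsub>R\<^esub> I"
  have Tc: "T \<subseteq> carrier R" unfolding T_def set_add_def' using Sc Ic by blast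
  have ST: "S \<subseteq> T"
  proof
    fix s assume s: "s \<in> S"
    have "s \<oplus> \<zero> \<in> T" unfolding T_def set_add_def'
      using s id_zero[OF Iid] by blast
    then show "s \<in> T" using s Sc by simp
  qed
  have IT: "I \<subseteq> T"
  proof
    fix s assume s: "s \<in> I"
    have "\<zero> \<oplus> s \<in> T" unfolding T_def set_add_def'
      using s subringE(2)[OF Ssub] by blast
    then show "s \<in> T" using s Ic by simp
  qed
  have Tsub: "subring T R"
  proof (rule subringI[OF Tc])
    show "\<one> \<in> T" using ST subringE(3)[OF Ssub] by blast
  next
    fix h assume "h \<in> T"
    then obtain s i where s: "s \<in> S" and i: "i \<in> I" and h: "h = s \<oplus> i"
      unfolding T_def set_add_def' by blast
    have "\<ominus> h = \<ominus> s \<oplus> \<ominus> i" using h Sc[OF s] Ic[OF i] by (simp add: minus_add)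
    moreover have "\<ominus> s \<in> S" using subringE(5)[OF Ssub s] .
    moreover have "\<ominus> i \<in> I" using id_neg[OF Iid i] .
    ultimately show "\<ominus> h \<in> T" unfolding T_def set_add_def' by blast
  next
    fix h1 h2 assume "h1 \<in> T" "h2 \<in> T"
    then obtain s1 i1 s2 i2 where s1: "s1 \<in> S" and i1: "i1 \<in> I" and h1: "h1 = s1 \<oplus> i1"
      and s2: "s2 \<in> S" and i2: "i2 \<in> I" and h2: "h2 = s2 \<oplus> i2"
      unfolding T_def set_add_def' by blast
    note cs = Sc[OF s1] Sc[OF s2] Ic[OF i1] Ic[OF i2]
    have e1: "h1 \<otimes> h2 = s1 \<otimes> s2 \<oplus> (s1 \<otimes> i2 \<oplus> i1 \<otimes> s2 \<oplus> i1 \<otimes> i2)"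
      unfolding h1 h2 using cs by algebra
    have "s1 \<otimes> i2 \<in> I" using ideal.I_l_closed[OF Iid i2 cs(1)] .
    moreover have "i1 \<otimes> s2 \<in> I" using ideal.I_r_closed[OF Iid i1 cs(2)] .
    moreover have "i1 \<otimes> i2 \<in> I" using ideal.I_r_closed[OF Iid i1 cs(4)] .
    ultimately have "s1 \<otimes> i2 \<oplus> i1 \<otimes> s2 \<oplus> i1 \<otimes> i2 \<in> I"
      using id_add[OF Iid] by blast
    moreover have "s1 \<otimes> s2 \<in> S" using subringE(6)[OF Ssub s1 s2] .
    ultimately show "h1 \<otimes> h2 \<in> T" unfolding e1 T_def set_add_def' by blast
  next
    fix h1 h2 assume "h1 \<in> T" "h2 \<in> T"
    then obtain s1 i1 s2 i2 where s1: "s1 \<in> S" and i1: "i1 \<in> I" and h1: "h1 = s1 \<oplus> i1"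
      and s2: "s2 \<in> S" and i2: "i2 \<in> I" and h2: "h2 = s2 \<oplus> i2"
      unfolding T_def set_add_def' by blast
    note cs = Sc[OF s1] Sc[OF s2] Ic[OF i1] Ic[OF i2]
    have e1: "h1 \<oplus> h2 = (s1 \<oplus> s2) \<oplus> (i1 \<oplus> i2)"
      unfolding h1 h2 using cs by algebra
    have "i1 \<oplus> i2 \<in> I" using id_add[OF Iid i1 i2] .
    moreover have "s1 \<oplus> s2 \<in> S" using subringE(7)[OF Ssub s1 s2] .
    ultimately show "h1 \<oplus> h2 \<in> T" unfolding e1 T_def set_add_def' by blast
  qed
  have Tres: "same_residue_field R m T" using res ST unfolding same_residue_field_def by blast
  have Tne: "T \<noteq> carrier R"
  proof
    assume Tall: "T = carrier R"
    have base: "\<And>y. y \<in> m \<Longrightarrow> \<exists>s\<in>S \<inter> m. y \<ominus> s \<in> P 2"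
    proof -
      fix y assume y: "y \<in> m"
      then have "y \<in> T" using Tall mc by blast
      then obtain s i where s: "s \<in> S" and i: "i \<in> I" and yi: "y = s \<oplus> i"
        unfolding T_def set_add_def' by blast
      then obtain a c where a: "a \<in> P 2" and c: "c \<in> carrier R" and ia: "i = a \<oplus> c \<otimes> q"
        unfolding I_def set_add_def' cgenideal_def by blast
      obtain s' where s': "s' \<in> S" and u: "c \<ominus> s' \<in> m" using res c unfolding same_residue_field_def by blast
      have uq: "(c \<ominus> s') \<otimes> q \<in> P 2" using Pm[of "c \<ominus> s'" 1 q 1] u qm P1 by (simp add: numeral_2_eq_2)
      note cs = Sc[OF s] Sc[OF s'] Pc[OF a] c qc
      have eq: "y \<ominus> (s \<oplus> s' \<otimes> q) = a \<oplus> (c \<ominus> s') \<otimes> q"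
        unfolding yi ia using cs by algebra
      have inP2: "y \<ominus> (s \<oplus> s' \<otimes> q) \<in> P 2" unfolding eq
        using a uq id_add[OF Pid] by blast
      have wS: "s \<oplus> s' \<otimes> q \<in> S" using subringE(6,7)[OF Ssub] s s' qS by blast
      have eq2: "s \<oplus> s' \<otimes> q = y \<ominus> (y \<ominus> (s \<oplus> s' \<otimes> q))"
        using cs mc[OF y] by algebra
      have "y \<ominus> (y \<ominus> (s \<oplus> s' \<otimes> q)) \<in> m" using id_minus[OF mI y] inP2 P2m by blast
      then have "s \<oplus> s' \<otimes> q \<in> m" by (simp only: eq2[symmetric])
      then show "\<exists>s\<in>S \<inter> m. y \<ominus> s \<in> P 2" using wS inP2 by blast
    qed
    have E: "\<And>k. \<forall>y\<in>P k. \<exists>s\<in>S \<inter> P k. y \<ominus> s \<in> P (Suc k)"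
    proof -
      fix k show "\<forall>y\<in>P k. \<exists>s\<in>S \<inter> P k. y \<ominus> s \<in> P (Suc k)"
      proof (induction k)
        case 0
        show ?case
        proof
          fix y assume "y \<in> P 0"
          then have y: "y \<in> carrier R" unfolding P_def by simp
          obtain s where "s \<in> S" "y \<ominus> s \<in> m" using res y unfolding same_residue_field_def by blast
          then show "\<exists>s\<in>S \<inter> P 0. y \<ominus> s \<in> P (Suc 0)" using P1 Sc unfolding P_def by auto
        qed
      next
        case (Suc k)
        show ?case
        proof
          fix y assume "y \<in> P (Suc k)"
          then have "y \<in> m \<cdot> P k" unfolding P_def by simp
          then show "\<exists>s\<in>S \<inter> P (Suc k). y \<ominus> s \<in> P (Suc (Suc k))"
          proof (induction y rule: ideal_prod.induct)
            case (prod a b)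
            obtain t where t: "t \<in> S \<inter> m" and at: "a \<ominus> t \<in> P 2" using base[OF prod(1)] by blast
            obtain s where s: "s \<in> S \<inter> P k" and bs: "b \<ominus> s \<in> P (Suc k)" using Suc prod(2) by blast
            have tc: "t \<in> carrier R" using t Sc by blast
            have sc: "s \<in> carrier R" using s Sc by blast
            note cs = mc[OF prod(1)] Pc[OF prod(2)] tc sc
            have tsS: "t \<otimes> s \<in> S" using subringE(6)[OF Ssub] s t by blast
            have tsP: "t \<otimes> s \<in> P (Suc k)" using Pm[of t 1 s k] t s P1 by (simp add: numeral_2_eq_2)
            have eq: "a \<otimes> b \<ominus> t \<otimes> s = (a \<ominus> t) \<otimes> b \<oplus> t \<otimes> (b \<ominus> s)"
              using cs s t by algebra
            have x1: "(a \<ominus> t) \<otimes> b \<in> P (Suc (Suc k))" using Pm[OF at prod(2)] by simp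
            have x2: "t \<otimes> (b \<ominus> s) \<in> P (Suc (Suc k))" using Pm[of t 1 "b \<ominus> s" "Suc k"] t bs P1 by (simp add: numeral_2_eq_2)
            have "a \<otimes> b \<ominus> t \<otimes> s \<in> P (Suc (Suc k))" unfolding eq
              using x1 x2 id_add[OF Pid] by blast
            then show ?case using tsS tsP by blast
          next
            case (sum y1 y2)
            obtain s1 where s1: "s1 \<in> S \<inter> P (Suc k)" and e1: "y1 \<ominus> s1 \<in> P (Suc (Suc k))" using sum.IH(1) by blast
            obtain s2 where s2: "s2 \<in> S \<inter> P (Suc k)" and e2: "y2 \<ominus> s2 \<in> P (Suc (Suc k))" using sum.IH(2) by blast
            have yc: "y1 \<in> carrier R" "y2 \<in> carrier R"
              using sum.hyps ideal_prod_in_carrier[OF mI Pid[of k, unfolded P_def]] unfolding P_def by blast+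
            have sc1: "s1 \<in> carrier R" using s1 Sc by blast
            have sc2: "s2 \<in> carrier R" using s2 Sc by blast
            note cs = yc sc1 sc2
            have eq: "y1 \<oplus> y2 \<ominus> (s1 \<oplus> s2) = (y1 \<ominus> s1) \<oplus> (y2 \<ominus> s2)" using cs s1 s2 by algebra
            have "y1 \<oplus> y2 \<ominus> (s1 \<oplus> s2) \<in> P (Suc (Suc k))" unfolding eq
              using e1 e2 id_add[OF Pid] by blast
            moreover have "s1 \<oplus> s2 \<in> S \<inter> P (Suc k)"
              using s1 s2 subringE(7)[OF Ssub] id_add[OF Pid] by blast
            ultimately show ?case by blast
          qed
        qed
      qed
    qed
    have D: "\<And>k. \<forall>x\<in>carrier R. \<exists>s\<in>S. x \<ominus> s \<in> P k"
    proof -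
      fix k show "\<forall>x\<in>carrier R. \<exists>s\<in>S. x \<ominus> s \<in> P k"
      proof (induction k)
        case 0 show ?case
        proof
          fix x assume x: "x \<in> carrier R"
          have "x \<ominus> \<zero> \<in> carrier R" using x by simp
          then show "\<exists>s\<in>S. x \<ominus> s \<in> P 0" unfolding P_def using subringE(2)[OF Ssub] by auto
        qed
      next
        case (Suc k) show ?case
        proof
          fix x assume x: "x \<in> carrier R"
          obtain s where s: "s \<in> S" and xs: "x \<ominus> s \<in> P k" using Suc x by blast
          obtain s' where s': "s' \<in> S \<inter> P k" and xs': "x \<ominus> s \<ominus> s' \<in> P (Suc k)" using E xs by blast
          have s'c: "s' \<in> carrier R" using s' Sc by blast
          have eq: "x \<ominus> (s \<oplus> s') = x \<ominus> s \<ominus> s'" using x Sc[OF s] s'c by algebra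
          have "s \<oplus> s' \<in> S" using subringE(7)[OF Ssub] s s' by blast
          then show "\<exists>s\<in>S. x \<ominus> s \<in> P (Suc k)" using xs' eq by metis
        qed
      qed
    qed
    have "carrier R \<subseteq> S"
    proof
      fix x assume x: "x \<in> carrier R"
      obtain s where s: "s \<in> S" and "x \<ominus> s \<in> P n" using D x by blast
      then have "x \<ominus> s = \<zero>" using nil unfolding P_def by simp
      then have "x = s" using x Sc[OF s] by (simp add: r_right_minus_eq)
      then show "x \<in> S" using s by simp
    qed
    then show False using Sne Sc by blast
  qed
  have TS: "T = S" using Smax[OF Tsub Tne Tres ST] .
  have IS: "I \<subseteq> S" using IT TS by simp
  have idl: "ideal (m \<inter> S) R"
  proof (rule idealI[OF ring_axioms])
    show "subgroup (m \<inter> S) (add_monoid R)"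
      by (rule add.subgroups_Inter_pair[OF additive_subgroup.a_subgroup[OF ideal.axioms(1)[OF mI]] subring.axioms(1)[OF Ssub]])
  next
    fix a x assume a: "a \<in> m \<inter> S" and x: "x \<in> carrier R"
    obtain s where s: "s \<in> S" and xs: "x \<ominus> s \<in> m" using res x unfolding same_residue_field_def by blast
    have ac: "a \<in> carrier R" using a mc by blast
    have e: "x \<otimes> a = s \<otimes> a \<oplus> (x \<ominus> s) \<otimes> a" using x Sc[OF s] ac by algebra
    have "(x \<ominus> s) \<otimes> a \<in> P 2" using Pm[of "x \<ominus> s" 1 a 1] xs a P1 by (simp add: numeral_2_eq_2)
    then have "(x \<ominus> s) \<otimes> a \<in> S" using P2I IS by blast
    moreover have "s \<otimes> a \<in> S" using subringE(6)[OF Ssub s] a by blast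
    ultimately have xaS: "x \<otimes> a \<in> S" unfolding e using subringE(7)[OF Ssub] by blast
    have xam: "x \<otimes> a \<in> m" using ideal.I_l_closed[OF mI _ x] a by blast
    show "x \<otimes> a \<in> m \<inter> S" using xaS xam by blast
    then show "a \<otimes> x \<in> m \<inter> S" using m_comm x mc a by auto
  qed
  have "m \<cdot> m <+>\<^bsub>R\<^esub> PIdl q \<subseteq> S" using IS unfolding I_def P2 .
  moreover have "m \<cdot> m <+>\<^bsub>R\<^esub> PIdl q \<subseteq> m" using Im unfolding I_def P2 .
  ultimately show ?thesis using idl unfolding q_def by blast
qed

end

theorem lemma22:
  fixes R :: "('a, 'b) ring_scheme" and m S :: "'a set" and p :: nat
  assumes star: "cond_star R m p"
    and S_in: "S \<in> proper_subrings_same_residue R m"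
    and S_max: "\<forall>T \<in> proper_subrings_same_residue R m. S \<subseteq> T \<longrightarrow> T = S"
  shows "(m \<cdot>\<^bsub>R\<^esub> m) <+>\<^bsub>R\<^esub> (PIdl\<^bsub>R\<^esub> ([p] \<cdot>\<^bsub>R\<^esub> \<one>\<^bsub>R\<^esub>)) \<subseteq> S \<and>
         ideal (m \<inter> S) R \<and>
         (m \<cdot>\<^bsub>R\<^esub> m) <+>\<^bsub>R\<^esub> (PIdl\<^bsub>R\<^esub> ([p] \<cdot>\<^bsub>R\<^esub> \<one>\<^bsub>R\<^esub>)) \<subseteq> m \<inter> S"
proof -
  have cr: "cring R" and loc: "local_ring_with R m" and pp: "Factorial_Ring.prime p"
    and chN: "\<exists>N::nat. N \<ge> 1 \<and> ring_char R = p ^ N" and nilp: "nilpotent_ideal R m"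
    using star unfolding cond_star_def by auto
  interpret cring R by (rule cr)
  have mx: "maximalideal m R" using loc unfolding local_ring_with_def by blast
  have mI: "ideal m R" using mx by (rule maximalideal.axioms(1))
  have pr: "primeideal m R" using maximalideal_prime[OF mx] .
  obtain n where nil: "ideal_power R m n = {\<zero>\<^bsub>R\<^esub>}" using nilp unfolding nilpotent_ideal_def by blast
  obtain N :: nat where N1: "N \<ge> 1" and chr: "ring_char R = p ^ N" using chN by blast
  have pos: "p ^ N > 0" using pp by (simp add: prime_gt_0_nat)
  have ex: "\<exists>n::nat. n > 0 \<and> [n] \<cdot>\<^bsub>R\<^esub> \<one>\<^bsub>R\<^esub> = \<zero>\<^bsub>R\<^esub>"
  proof (rule ccontr)
    assume "\<not> ?thesis"
    then have "ring_char R = 0" unfolding ring_char_def by (rule if_not_P)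
    then show False using chr pos by simp
  qed
  have "ring_char R = (LEAST n::nat. n > 0 \<and> [n] \<cdot>\<^bsub>R\<^esub> \<one>\<^bsub>R\<^esub> = \<zero>\<^bsub>R\<^esub>)"
    unfolding ring_char_def using ex by simp
  then have "[ring_char R] \<cdot>\<^bsub>R\<^esub> \<one>\<^bsub>R\<^esub> = \<zero>\<^bsub>R\<^esub>"
    using LeastI_ex[OF ex] by simp
  then have "add_pow R (p ^ N) \<one>\<^bsub>R\<^esub> = \<zero>\<^bsub>R\<^esub>" using chr by simp
  then have "(add_pow R p \<one>\<^bsub>R\<^esub>) [^]\<^bsub>R\<^esub> N \<in> m"
    using pow_char[of p N] id_zero[OF mI] by simp
  then have pm: "add_pow R p \<one>\<^bsub>R\<^esub> \<in> m"
    using prime_pow_in[OF pr _ _ N1] by simp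
  have Ssub: "subring S R" and Sne: "S \<noteq> carrier R" and res: "same_residue_field R m S"
    using S_in unfolding proper_subrings_same_residue_def by auto
  have Smax: "\<And>T. subring T R \<Longrightarrow> T \<noteq> carrier R \<Longrightarrow> same_residue_field R m T \<Longrightarrow> S \<subseteq> T \<Longrightarrow> T = S"
    using S_max unfolding proper_subrings_same_residue_def by blast
  show ?thesis using main[OF mI nil pm Ssub Sne res Smax] by simp
qed

end
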